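(* The Directed Simplicial Weisfeiler–Leman (D-SWL) test with the restricted update rule $c^{t+1}_\sigma=\operatorname{HASH}\big(c^t_\sigma,c^t_{\mathcal{B}}(\sigma),((c^{ij}_\uparrow)^t(\sigma))_{i,j}\big)$ is as powerful as D-SWL with the generalised update rule $c^{t+1}_\sigma=\operatorname{HASH}\big(c^t_\sigma,c^t_{\mathcal{B}}(\sigma),c^t_{\mathcal{C}}(\sigma),((c^{ij}_\downarrow)^t(\sigma))_{i,j},((c^{ij}_\uparrow)^t(\sigma))_{i,j}\big)$. That is, for any two directed simplicial complexes $\mathcal{K}_1, \mathcal{K}_2$, the restricted test distinguishes them if and only if the generalised test distinguishes them.
   Context: A directed simplicial complex is a pair $\mathcal{K}=(V,\Sigma)$, where $V$ is a finite vertex set and $\Sigma$ is a collection of non-empty ordered tuples of vertices (directed simplices) that is closed under taking non-empty ordered subtuples. A tuple $\sigma=(v_0,\dots,v_n)$ has dimension $n$. For $0\le i\le n$, the face map $d_i(\sigma)$ is the tuple obtained by deleting the $i$-th vertex and keeping the order of the rest; $d_i^{-1}(\sigma)$ is the set of simplices $\rho$ with $d_i(\rho)=\sigma$. For simplices of equal dimension: - $\tau\in\mathcal{A}^{ij}_\downarrow(\sigma)$ if there is a $\kappa$ with $d_i(\sigma)=\kappa=d_j(\tau)$. - $\tau\in\mathcal{A}^{ij}_\uparrow(\sigma)$ if there is a $\kappa$ with $d_i(\kappa)=\sigma$ and $d_j(\kappa)=\tau$. The D-SWL test assigns colours $c^t$ to all simplices, where $c^0$ is the same colour for every simplex and HASH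 is an injective function. For an $n$-simplex $\sigma$, the following colourings are used: - The boundary colouring is the ordered tuple $c^t_{\mathcal{B}}(\sigma)=(c^t_{d_0(\sigma)},\dots,c^t_{d_n(\sigma)})$, which is empty for vertices. - The coboundary colouring is $c^t_{\mathcal{C}}(\sigma)=\bigcup_{i=0}^{n+1}\{\{c^t_\tau:\tau\in d_i^{-1}(\sigma)\}\}$. - The down colouring is $(c^{ij}_\downarrow)^t(\sigma)=\{\{(c^t_\tau,c^t_\kappa):\tau\in\mathcal{A}^{ij}_\downarrow(\sigma),\ d_i(\sigma)=\kappa=d_j(\tau)\}\}$. - The up colouring is $(c^{ij}_\uparrow)^t(\sigma)=\{\{(c^t_\tau,c^t_\kappa):\tau\in\mathcal{A}^{ij}_\uparrow(\sigma),\ d_i(\kappa)=\sigma,\ d_j(\kappa)=\tau\}\}$. The tuple of down colourings ranges over all index pairs $(i,j)$ for which the face maps are defined, and likewise for the up colourings. Colours are refined until they stabilize. The test distinguishes two complexes if their stable colour histograms differ; the two complexes are coloured jointly, i.e., with the same HASH. *)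

theory Defs
  imports Main "HOL-Library.Multiset"
begin

text \<open>Directed simplices are non-empty lists of vertices; the face map d_i deletes the
  i-th entry.\<close>

definition face :: "nat \<Rightarrow> 'v list \<Rightarrow> 'v list" where
  "face i xs = take i xs @ drop (Suc i) xs"

definition dsc :: "'v set \<Rightarrow> 'v list set \<Rightarrow> bool" where
  "dsc V S \<longleftrightarrow> finite V \<and> finite S \<and> (\<forall>\<sigma>\<in>S. \<sigma> \<noteq> [] \<and> set \<sigma> \<subseteq> V) \<and>
     (\<forall>\<sigma>\<in>S. \<forall>\<rho>\<in>set (subseqs \<sigma>). \<rho> \<noteq> [] \<longrightarrow> \<rho> \<in> S)"

text \<open>Colours are terms of a free datatype; the constructors HashR / HashG play the role of
  the injective HASH functions of the restricted / generalised update rules (shared by both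
  complexes, i.e. joint colouring).\<close>

datatype colour =
    Init
  | HashR colour "colour list" "(colour \<times> colour) multiset list"
  | HashG colour "colour list" "colour multiset" "(colour \<times> colour) multiset list"
          "(colour \<times> colour) multiset list"

text \<open>For an n-simplex \<sigma> (length \<sigma> = n+1).\<close>

definition boundary_col :: "('v list \<Rightarrow> colour) \<Rightarrow> 'v list \<Rightarrow> colour list" where
  "boundary_col c \<sigma> = (if length \<sigma> \<le> 1 then [] else map (\<lambda>i. c (face i \<sigma>)) [0..<length \<sigma>])"

definition coboundary_col :: "'v list set \<Rightarrow> ('v list \<Rightarrow> colour) \<Rightarrow> 'v list \<Rightarrow> colour multiset" where
  "coboundary_col S c \<sigma> =
     (\<Sum>i\<in>{0..length \<sigma>}. image_mset c
        (mset_set {\<rho>\<in>S. length \<rho> = Suc (length \<sigma>) \<and> face i \<rho> = \<sigma>}))"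

definition down_col :: "'v list set \<Rightarrow> ('v list \<Rightarrow> colour) \<Rightarrow> 'v list \<Rightarrow> nat \<Rightarrow> nat
    \<Rightarrow> (colour \<times> colour) multiset" where
  "down_col S c \<sigma> i j = image_mset (\<lambda>(\<tau>, \<kappa>). (c \<tau>, c \<kappa>))
     (mset_set {(\<tau>, \<kappa>). \<tau> \<in> S \<and> \<kappa> \<in> S \<and> length \<tau> = length \<sigma> \<and>
                      face i \<sigma> = \<kappa> \<and> face j \<tau> = \<kappa>})"

definition up_col :: "'v list set \<Rightarrow> ('v list \<Rightarrow> colour) \<Rightarrow> 'v list \<Rightarrow> nat \<Rightarrow> nat
    \<Rightarrow> (colour \<times> colour) multiset" where
  "up_col S c \<sigma> i j = image_mset (\<lambda>(\<tau>, \<kappa>). (c \<tau>, c \<kappa>))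
     (mset_set {(\<tau>, \<kappa>). \<tau> \<in> S \<and> \<kappa> \<in> S \<and> length \<tau> = length \<sigma> \<and>
                      length \<kappa> = Suc (length \<sigma>) \<and> face i \<kappa> = \<sigma> \<and> face j \<kappa> = \<tau>})"

definition downs :: "'v list set \<Rightarrow> ('v list \<Rightarrow> colour) \<Rightarrow> 'v list \<Rightarrow> (colour \<times> colour) multiset list" where
  "downs S c \<sigma> = [down_col S c \<sigma> i j. i \<leftarrow> [0..<length \<sigma>], j \<leftarrow> [0..<length \<sigma>]]"

definition ups :: "'v list set \<Rightarrow> ('v list \<Rightarrow> colour) \<Rightarrow> 'v list \<Rightarrow> (colour \<times> colour) multiset list" where
  "ups S c \<sigma> = [up_col S c \<sigma> i j. i \<leftarrow> [0..<Suc (length \<sigma>)], j \<leftarrow> [0..<Suc (length \<sigma>)]]"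

primrec colR :: "'v list set \<Rightarrow> nat \<Rightarrow> 'v list \<Rightarrow> colour" where
  "colR S 0 \<sigma> = Init"
| "colR S (Suc t) \<sigma> = HashR (colR S t \<sigma>) (boundary_col (colR S t) \<sigma>) (ups S (colR S t) \<sigma>)"

primrec colG :: "'v list set \<Rightarrow> nat \<Rightarrow> 'v list \<Rightarrow> colour" where
  "colG S 0 \<sigma> = Init"
| "colG S (Suc t) \<sigma> = HashG (colG S t \<sigma>) (boundary_col (colG S t) \<sigma>)
      (coboundary_col S (colG S t) \<sigma>) (downs S (colG S t) \<sigma>) (ups S (colG S t) \<sigma>)"

definition jdom :: "'v list set \<Rightarrow> 'v list set \<Rightarrow> ('v list + 'v list) set" where
  "jdom S1 S2 = Inl ` S1 \<union> Inr ` S2"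

definition jcol :: "('v list set \<Rightarrow> nat \<Rightarrow> 'v list \<Rightarrow> colour) \<Rightarrow> 'v list set \<Rightarrow> 'v list set
    \<Rightarrow> nat \<Rightarrow> ('v list + 'v list) \<Rightarrow> colour" where
  "jcol F S1 S2 t x = (case x of Inl \<sigma> \<Rightarrow> F S1 t \<sigma> | Inr \<sigma> \<Rightarrow> F S2 t \<sigma>)"

definition stab_time :: "('v list set \<Rightarrow> nat \<Rightarrow> 'v list \<Rightarrow> colour) \<Rightarrow> 'v list set \<Rightarrow> 'v list set \<Rightarrow> nat" where
  "stab_time F S1 S2 = (LEAST T. \<forall>x\<in>jdom S1 S2. \<forall>y\<in>jdom S1 S2.
      (jcol F S1 S2 T x = jcol F S1 S2 T y) \<longleftrightarrow> (jcol F S1 S2 (Suc T) x = jcol F S1 S2 (Suc T) y))"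

definition histogram :: "('v list set \<Rightarrow> nat \<Rightarrow> 'v list \<Rightarrow> colour) \<Rightarrow> 'v list set \<Rightarrow> nat \<Rightarrow> colour multiset" where
  "histogram F S t = image_mset (F S t) (mset_set S)"

definition distinguishes :: "('v list set \<Rightarrow> nat \<Rightarrow> 'v list \<Rightarrow> colour) \<Rightarrow> 'v list set \<Rightarrow> 'v list set \<Rightarrow> bool" where
  "distinguishes F S1 S2 \<longleftrightarrow>
     histogram F S1 (stab_time F S1 S2) \<noteq> histogram F S2 (stab_time F S1 S2)"

end

theory Submission
  imports Defs
begin

lemma length_face: "i < length xs \<Longrightarrow> length (face i xs) = length xs - 1"
  unfolding face_def by auto

lemma face_subseq: "i < length xs \<Longrightarrow> face i xs \<in> set (subseqs xs)"
proof (induction xs arbitrary: i)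
  case Nil then show ?case by simp
next
  case (Cons x xs)
  show ?case
  proof (cases i)
    case 0 then show ?thesis by (simp add: face_def Let_def subseqs_refl)
  next
    case (Suc k)
    with Cons have "face k xs \<in> set (subseqs xs)" by simp
    with Suc show ?thesis by (simp add: face_def Let_def)
  qed
qed

lemma dsc_face:
  assumes "dsc V S" "\<sigma> \<in> S" "2 \<le> length \<sigma>" "i < length \<sigma>"
  shows "face i \<sigma> \<in> S"
proof -
  have "face i \<sigma> \<noteq> []" using length_face[OF assms(4)] assms(3) by auto
  then show ?thesis using assms face_subseq[OF assms(4)] unfolding dsc_def by blast
qed

lemma dsc_nonempty: "dsc V S \<Longrightarrow> \<sigma> \<in> S \<Longrightarrow> \<sigma> \<noteq> []"
  unfolding dsc_def by blast

lemma dsc_finite: "dsc V S \<Longrightarrow> finite S"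
  unfolding dsc_def by blast

lemma nth_grid_aux:
  "i < k \<Longrightarrow> j < m \<Longrightarrow> concat (map (\<lambda>i. map (u i) [0..<m]) [0..<k]) ! (i*m+j) = u i j"
proof (induction k)
  case 0 then show ?case by simp
next
  case (Suc k)
  have len: "length (concat (map (\<lambda>i. map (u i) [0..<m]) [0..<k])) = k * m"
    by (induction k) auto
  show ?case
  proof (cases "i < k")
    case True
    have "i*m+j < k*m"
    proof -
      have "Suc i * m \<le> k * m" using True by (intro mult_le_mono1) simp
      then show ?thesis using Suc.prems(2) by simp
    qed
    then show ?thesis using Suc True len by (simp add: nth_append)
  next
    case False
    then have "i = k" using Suc.prems by simp
    then show ?thesis using len Suc.prems by (simp add: nth_append)
  qed
qed

lemma nth_grid:
  "i < m \<Longrightarrow> j < m \<Longrightarrow> [u i j. i \<leftarrow> [0..<m], j \<leftarrow> [0..<m]] ! (i*m+j) = u i j"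
  using nth_grid_aux[where k=m and u=u] by simp

lemma grid_cong:
  "(\<And>i j. i < m \<Longrightarrow> j < m \<Longrightarrow> u i j = v i j) \<Longrightarrow>
   [u i j. i \<leftarrow> [0..<m], j \<leftarrow> [0..<m]] = [v i j. i \<leftarrow> [0..<m], j \<leftarrow> [0..<m]]"
  by (auto intro!: arg_cong[where f=concat] map_cong)

lemma image_mset_sum:
  "image_mset h (\<Sum>i\<in>A. M i) = (\<Sum>i\<in>A. image_mset h (M i))"
  by (induction A rule: infinite_finite_induct) auto

section \<open>Transport of colourings\<close>

lemma transport_boundary:
  assumes "dsc V S" "\<sigma> \<in> S" "\<forall>x\<in>S. c' x = h (c x)"
  shows "boundary_col c' \<sigma> = map h (boundary_col c \<sigma>)"
  using assms dsc_face[OF assms(1,2)] unfolding boundary_col_def by auto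

lemma transport_cob:
  assumes "\<forall>x\<in>S. c' x = h (c x)"
  shows "coboundary_col S c' \<sigma> = image_mset h (coboundary_col S c \<sigma>)"
  unfolding coboundary_col_def image_mset_sum
proof (intro sum.cong refl)
  fix i
  show "image_mset c' (mset_set {\<rho> \<in> S. length \<rho> = Suc (length \<sigma>) \<and> face i \<rho> = \<sigma>}) =
      image_mset h (image_mset c (mset_set {\<rho> \<in> S. length \<rho> = Suc (length \<sigma>) \<and> face i \<rho> = \<sigma>}))"
    unfolding image_mset.compositionality
    by (rule image_mset_cong) (use assms in \<open>cases "finite {\<rho> \<in> S. length \<rho> = Suc (length \<sigma>) \<and> face i \<rho> = \<sigma>}"; auto\<close>)
qed

lemma transport_down:
  assumes "\<forall>x\<in>S. c' x = h (c x)"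
  shows "down_col S c' \<sigma> i j = image_mset (map_prod h h) (down_col S c \<sigma> i j)"
  unfolding down_col_def image_mset.compositionality
  by (rule image_mset_cong) (use assms in \<open>cases "finite {(\<tau>, \<kappa>). \<tau> \<in> S \<and> \<kappa> \<in> S \<and> length \<tau> = length \<sigma> \<and>
                      face i \<sigma> = \<kappa> \<and> face j \<tau> = \<kappa>}"; auto\<close>)

lemma transport_up:
  assumes "\<forall>x\<in>S. c' x = h (c x)"
  shows "up_col S c' \<sigma> i j = image_mset (map_prod h h) (up_col S c \<sigma> i j)"
  unfolding up_col_def image_mset.compositionality
  by (rule image_mset_cong) (use assms in \<open>cases "finite {(\<tau>, \<kappa>). \<tau> \<in> S \<and> \<kappa> \<in> S \<and> length \<tau> = length \<sigma> \<and>
                      length \<kappa> = Suc (length \<sigma>) \<and> face i \<kappa> = \<sigma> \<and> face j \<kappa> = \<tau>}"; auto\<close>)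

lemma transport_downs:
  assumes "\<forall>x\<in>S. c' x = h (c x)"
  shows "downs S c' \<sigma> = map (image_mset (map_prod h h)) (downs S c \<sigma>)"
  proof -
  have e: "down_col S c' \<sigma> i = (\<lambda>j. image_mset (map_prod h h) (down_col S c \<sigma> i j))" for i
    using transport_down[where c'=c' and c=c and h=h, OF assms] by auto
  show ?thesis unfolding downs_def by (simp add: e map_concat comp_def)
qed

lemma transport_ups:
  assumes "\<forall>x\<in>S. c' x = h (c x)"
  shows "ups S c' \<sigma> = map (image_mset (map_prod h h)) (ups S c \<sigma>)"
  proof -
  have e: "up_col S c' \<sigma> i = (\<lambda>j. image_mset (map_prod h h) (up_col S c \<sigma> i j))" for i
    using transport_up[where c'=c' and c=c and h=h, OF assms] by auto
  show ?thesis unfolding ups_def by (simp add: e map_concat comp_def)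
qed

section \<open>Recovering coboundary and down colourings from up colourings\<close>

lemma cob_from_up:
  assumes "dsc V S" "\<sigma> \<in> S"
  shows "image_mset snd (up_col S c \<sigma> i 0) =
    image_mset c (mset_set {\<rho>\<in>S. length \<rho> = Suc (length \<sigma>) \<and> face i \<rho> = \<sigma>})"
proof -
  let ?B = "{\<rho>\<in>S. length \<rho> = Suc (length \<sigma>) \<and> face i \<rho> = \<sigma>}"
  let ?A = "{(\<tau>, \<kappa>). \<tau> \<in> S \<and> \<kappa> \<in> S \<and> length \<tau> = length \<sigma> \<and>
                      length \<kappa> = Suc (length \<sigma>) \<and> face i \<kappa> = \<sigma> \<and> face 0 \<kappa> = \<tau>}"
  have ne: "\<sigma> \<noteq> []" using dsc_nonempty[OF assms] .
  have "?A = (\<lambda>\<kappa>. (face 0 \<kappa>, \<kappa>)) ` ?B"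
  proof (intro set_eqI iffI)
    fix p assume "p \<in> ?A" then show "p \<in> (\<lambda>\<kappa>. (face 0 \<kappa>, \<kappa>)) ` ?B" by auto
  next
    fix p assume "p \<in> (\<lambda>\<kappa>. (face 0 \<kappa>, \<kappa>)) ` ?B"
    then obtain \<kappa> where k: "\<kappa> \<in> ?B" "p = (face 0 \<kappa>, \<kappa>)" by blast
    have "2 \<le> length \<kappa>" using k ne by (cases \<sigma>) auto
    then have "face 0 \<kappa> \<in> S" using dsc_face[OF assms(1)] k by auto
    moreover have "length (face 0 \<kappa>) = length \<sigma>" using k length_face[of 0 \<kappa>] by auto
    ultimately show "p \<in> ?A" using k by auto
  qed
  moreover have "inj_on (\<lambda>\<kappa>. (face 0 \<kappa>, \<kappa>)) ?B" by (rule inj_onI) auto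
  ultimately have "mset_set ?A = image_mset (\<lambda>\<kappa>. (face 0 \<kappa>, \<kappa>)) (mset_set ?B)"
    by (simp add: image_mset_mset_set)
  then show ?thesis unfolding up_col_def by (simp add: image_mset.compositionality comp_def)
qed

lemma down_from_cob:
  assumes "dsc V S" "\<sigma> \<in> S" "2 \<le> length \<sigma>" "i < length \<sigma>"
  shows "down_col S c \<sigma> i j = image_mset (\<lambda>a. (a, c (face i \<sigma>)))
     (image_mset c (mset_set {\<rho>\<in>S. length \<rho> = Suc (length (face i \<sigma>)) \<and> face j \<rho> = face i \<sigma>}))"
proof -
  let ?k = "face i \<sigma>"
  let ?B = "{\<rho>\<in>S. length \<rho> = Suc (length ?k) \<and> face j \<rho> = ?k}"
  let ?A = "{(\<tau>, \<kappa>). \<tau> \<in> S \<and> \<kappa> \<in> S \<and> length \<tau> = length \<sigma> \<and>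
                      face i \<sigma> = \<kappa> \<and> face j \<tau> = \<kappa>}"
  have kS: "?k \<in> S" using dsc_face[OF assms] .
  have lk: "Suc (length ?k) = length \<sigma>" using length_face[OF assms(4)] assms(3) by simp
  have "?A = (\<lambda>\<tau>. (\<tau>, ?k)) ` ?B" using kS lk by auto
  moreover have "inj_on (\<lambda>\<tau>. (\<tau>, ?k)) ?B" by (rule inj_onI) auto
  ultimately have "mset_set ?A = image_mset (\<lambda>\<tau>. (\<tau>, ?k)) (mset_set ?B)"
    by (simp add: image_mset_mset_set)
  then show ?thesis unfolding down_col_def by (simp add: image_mset.compositionality comp_def)
qed

lemma down_vertex:
  assumes "dsc V S" "length \<sigma> = 1" "i < length \<sigma>"
  shows "down_col S c \<sigma> i j = {#}"
proof -
  have "face i \<sigma> = []" using assms(2,3) length_face[OF assms(3)] by auto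
  then have "{(\<tau>, \<kappa>). \<tau> \<in> S \<and> \<kappa> \<in> S \<and> length \<tau> = length \<sigma> \<and>
                      face i \<sigma> = \<kappa> \<and> face j \<tau> = \<kappa>} = {}"
    using dsc_nonempty[OF assms(1)] by blast
  then show ?thesis unfolding down_col_def by (simp only: mset_set_empty_iff image_mset_is_empty_iff) simp
qed

definition COB :: "nat \<Rightarrow> (colour \<times> colour) multiset list \<Rightarrow> colour multiset" where
  "COB m e = (\<Sum>i\<in>{0..<m}. image_mset snd (e ! (i * m)))"

lemma cob_eq_COB:
  assumes "dsc V S" "\<sigma> \<in> S"
  shows "coboundary_col S c \<sigma> = COB (Suc (length \<sigma>)) (ups S c \<sigma>)"
proof -
  have "ups S c \<sigma> ! (i * Suc (length \<sigma>)) = up_col S c \<sigma> i 0" if "i < Suc (length \<sigma>)" for i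
    using nth_grid[OF that, of 0 "up_col S c \<sigma>"] unfolding ups_def by simp
  then show ?thesis unfolding COB_def coboundary_col_def atLeastLessThanSuc_atLeastAtMost
    using cob_from_up[OF assms] by (intro sum.cong) auto
qed

definition lenb :: "'a list \<Rightarrow> nat" where
  "lenb b = (if b = [] then 1 else length b)"

lemma lenb_boundary:
  assumes "\<sigma> \<noteq> []"
  shows "lenb (boundary_col c \<sigma>) = length \<sigma>"
  using assms unfolding lenb_def boundary_col_def by (cases \<sigma>) auto

fun r1 :: "colour \<Rightarrow> colour" where
  "r1 (HashR a b e) = a"
| "r1 _ = Init"

fun r3 :: "colour \<Rightarrow> (colour \<times> colour) multiset list" where
  "r3 (HashR a b e) = e"
| "r3 _ = []"

fun q1 :: "colour \<Rightarrow> colour" where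
  "q1 (HashG a b c d e) = a"
| "q1 _ = Init"

definition DOWNS :: "colour list \<Rightarrow> (colour \<times> colour) multiset list" where
  "DOWNS b = (let m = lenb b in
     [if m = 1 then {#} else image_mset (\<lambda>a. (a, r1 (b ! i))) (image_mset snd (r3 (b ! i) ! (j * m))).
        i \<leftarrow> [0..<m], j \<leftarrow> [0..<m]])"

lemma downs_eq_DOWNS:
  assumes "dsc V S" "\<sigma> \<in> S"
  shows "downs S (colR S t) \<sigma> = DOWNS (boundary_col (colR S (Suc t)) \<sigma>)"
proof -
  let ?b = "boundary_col (colR S (Suc t)) \<sigma>"
  let ?m = "length \<sigma>"
  have ne: "\<sigma> \<noteq> []" using dsc_nonempty[OF assms] .
  have m: "lenb ?b = ?m" using lenb_boundary[OF ne] .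
  have "down_col S (colR S t) \<sigma> i j =
     (if ?m = 1 then {#} else image_mset (\<lambda>a. (a, r1 (?b ! i))) (image_mset snd (r3 (?b ! i) ! (j * ?m))))"
    if ij: "i < ?m" "j < ?m" for i j
  proof (cases "?m = 1")
    case True then show ?thesis using down_vertex[OF assms(1) True ij(1)] by simp
  next
    case False
    have "?m \<noteq> 0" using ne by simp
    with False have m2: "2 \<le> ?m" by linarith
    let ?k = "face i \<sigma>"
    have kS: "?k \<in> S" using dsc_face[OF assms m2 ij(1)] .
    have lk: "Suc (length ?k) = ?m" using length_face[OF ij(1)] m2 by simp
    have bi: "?b ! i = colR S (Suc t) ?k" using m2 ij unfolding boundary_col_def by simp
    have u: "ups S (colR S t) ?k ! (j * Suc (length ?k)) = up_col S (colR S t) ?k j 0"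
      unfolding ups_def using nth_grid[of j "Suc (length ?k)" 0 "up_col S (colR S t) ?k"] ij lk ne
      by simp
    have "r3 (?b ! i) ! (j * ?m) = up_col S (colR S t) ?k j 0"
      using bi u lk by simp
    then show ?thesis using False down_from_cob[OF assms m2 ij(1), of "colR S t" j]
        cob_from_up[OF assms(1) kS, of "colR S t" j] bi by simp
  qed
  then show ?thesis unfolding downs_def DOWNS_def m Let_def by (intro grid_cong) auto
qed

lemma ref_R: "colR S t \<sigma> = r1 (colR S (Suc t) \<sigma>)"
  by simp

lemma ref_G: "colG S t \<sigma> = q1 (colG S (Suc t) \<sigma>)"
  by simp

fun stepR :: "(colour \<Rightarrow> colour) \<Rightarrow> colour \<Rightarrow> colour" where
  "stepR h (HashR a b e) = HashR (h a) (map h b) (map (image_mset (map_prod h h)) e)"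
| "stepR h _ = Init"

fun stepG :: "(colour \<Rightarrow> colour) \<Rightarrow> colour \<Rightarrow> colour" where
  "stepG h (HashG a b c d e) = HashG (h a) (map h b) (image_mset h c)
     (map (image_mset (map_prod h h)) d) (map (image_mset (map_prod h h)) e)"
| "stepG h _ = Init"

fun RG :: "(colour \<Rightarrow> colour) \<Rightarrow> colour \<Rightarrow> colour" where
  "RG g (HashG a b c d e) = HashR (g a) (map g b) (map (image_mset (map_prod g g)) e)"
| "RG g _ = Init"

fun GR :: "(colour \<Rightarrow> colour) \<Rightarrow> colour \<Rightarrow> colour" where
  "GR g (HashR a b e) = HashG (g (r1 a)) (map (g \<circ> r1) b)
     (image_mset (g \<circ> r1) (COB (Suc (lenb b)) e))
     (map (image_mset (map_prod g g)) (DOWNS b))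
     (map (image_mset (map_prod (g \<circ> r1) (g \<circ> r1))) e)"
| "GR g _ = Init"

lemma step_R:
  assumes "dsc V S" "\<forall>x\<in>S. colR S (Suc s) x = h (colR S s x)" "\<sigma> \<in> S"
  shows "colR S (Suc (Suc s)) \<sigma> = stepR h (colR S (Suc s) \<sigma>)"
proof -
  note tb = transport_boundary[where c'="colR S (Suc s)" and c="colR S s" and h=h, OF assms(1,3,2)]
  note tu = transport_ups[where c'="colR S (Suc s)" and c="colR S s" and h=h, OF assms(2)]
  have "colR S (Suc (Suc s)) \<sigma> = HashR (colR S (Suc s) \<sigma>) (boundary_col (colR S (Suc s)) \<sigma>)
      (ups S (colR S (Suc s)) \<sigma>)" by (rule colR.simps(2))
  also have "\<dots> = HashR (h (colR S s \<sigma>)) (map h (boundary_col (colR S s) \<sigma>))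
      (map (image_mset (map_prod h h)) (ups S (colR S s) \<sigma>))"
    using assms(2,3) by (simp only: tb tu)
  also have "\<dots> = stepR h (colR S (Suc s) \<sigma>)" by (simp only: colR.simps(2) stepR.simps)
  finally show ?thesis .
qed

lemma step_G:
  assumes "dsc V S" "\<forall>x\<in>S. colG S (Suc s) x = h (colG S s x)" "\<sigma> \<in> S"
  shows "colG S (Suc (Suc s)) \<sigma> = stepG h (colG S (Suc s) \<sigma>)"
proof -
  note tb = transport_boundary[where c'="colG S (Suc s)" and c="colG S s" and h=h, OF assms(1,3,2)]
  note tu = transport_ups[where c'="colG S (Suc s)" and c="colG S s" and h=h, OF assms(2)]
  note td = transport_downs[where c'="colG S (Suc s)" and c="colG S s" and h=h, OF assms(2)]
  note tc = transport_cob[where c'="colG S (Suc s)" and c="colG S s" and h=h, OF assms(2)]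
  have "colG S (Suc (Suc s)) \<sigma> = HashG (colG S (Suc s) \<sigma>) (boundary_col (colG S (Suc s)) \<sigma>)
      (coboundary_col S (colG S (Suc s)) \<sigma>) (downs S (colG S (Suc s)) \<sigma>)
      (ups S (colG S (Suc s)) \<sigma>)" by (rule colG.simps(2))
  also have "\<dots> = HashG (h (colG S s \<sigma>)) (map h (boundary_col (colG S s) \<sigma>))
      (image_mset h (coboundary_col S (colG S s) \<sigma>))
      (map (image_mset (map_prod h h)) (downs S (colG S s) \<sigma>))
      (map (image_mset (map_prod h h)) (ups S (colG S s) \<sigma>))"
    using assms(2,3) by (simp only: tb tu td tc)
  also have "\<dots> = stepG h (colG S (Suc s) \<sigma>)" by (simp only: colG.simps(2) stepG.simps)
  finally show ?thesis .
qed

lemma R_by_G: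
  assumes "dsc V S" "\<forall>x\<in>S. colR S t x = g (colG S t x)" "\<sigma> \<in> S"
  shows "colR S (Suc t) \<sigma> = RG g (colG S (Suc t) \<sigma>)"
  using transport_boundary[where c'="colR S t" and c="colG S t" and h=g, OF assms(1,3,2)] transport_ups[where c'="colR S t" and c="colG S t" and h=g, OF assms(2)] assms(2,3)
  by simp

lemma G_by_R:
  assumes "dsc V S" "\<forall>x\<in>S. colG S t x = g (colR S (2*t) x)" "\<sigma> \<in> S"
  shows "colG S (Suc t) \<sigma> = GR g (colR S (2 * Suc t) \<sigma>)"
proof -
  let ?c1 = "colR S (Suc (2*t))"
  let ?c0 = "colR S (2*t)"
  have h1: "\<forall>x\<in>S. colG S t x = (g \<circ> r1) (?c1 x)" using assms(2) by simp
  have e: "colR S (2 * Suc t) \<sigma> = HashR (?c1 \<sigma>) (boundary_col ?c1 \<sigma>) (ups S ?c1 \<sigma>)"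
    by (simp del: colR.simps add: colR.simps(2)[of S "Suc (2*t)"])
  have ne: "\<sigma> \<noteq> []" using dsc_nonempty[OF assms(1,3)] .
  have l: "lenb (boundary_col ?c1 \<sigma>) = length \<sigma>" using lenb_boundary[OF ne] .
  have "coboundary_col S (colG S t) \<sigma> = image_mset (g \<circ> r1) (coboundary_col S ?c1 \<sigma>)"
    using transport_cob[where c'="colG S t" and c="?c1" and h="g \<circ> r1", OF h1] .
  also have "\<dots> = image_mset (g \<circ> r1) (COB (Suc (length \<sigma>)) (ups S ?c1 \<sigma>))"
    using cob_eq_COB[OF assms(1,3)] by simp
  finally have cob: "coboundary_col S (colG S t) \<sigma> =
      image_mset (g \<circ> r1) (COB (Suc (length \<sigma>)) (ups S ?c1 \<sigma>))" .
  have dn: "downs S (colG S t) \<sigma> = map (image_mset (map_prod g g)) (DOWNS (boundary_col ?c1 \<sigma>))"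
    using transport_downs[where c'="colG S t" and c="colR S (2*t)" and h=g, OF assms(2)] downs_eq_DOWNS[OF assms(1,3), of "2*t"] by simp
  show ?thesis
    unfolding e GR.simps l colG.simps(2)
    using cob dn transport_boundary[where c'="colG S t" and c="?c1" and h="g \<circ> r1", OF assms(1,3) h1] transport_ups[where c'="colG S t" and c="?c1" and h="g \<circ> r1", OF h1] h1 assms(3)
    by simp
qed

section \<open>Joint determination and stabilisation\<close>

definition DET :: "('v list set \<Rightarrow> 'v list \<Rightarrow> colour) \<Rightarrow> ('v list set \<Rightarrow> 'v list \<Rightarrow> colour)
    \<Rightarrow> 'v list set \<Rightarrow> 'v list set \<Rightarrow> bool" where
  "DET A B S1 S2 \<longleftrightarrow> (\<exists>g. (\<forall>\<sigma>\<in>S1. A S1 \<sigma> = g (B S1 \<sigma>)) \<and> (\<forall>\<sigma>\<in>S2. A S2 \<sigma> = g (B S2 \<sigma>)))"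

lemma DET_refl: "DET A A S1 S2"
  unfolding DET_def by (rule exI[of _ id]) simp

lemma DET_trans:
  assumes "DET A B S1 S2" "DET B C S1 S2"
  shows "DET A C S1 S2"
proof -
  obtain g where g: "\<forall>\<sigma>\<in>S1. A S1 \<sigma> = g (B S1 \<sigma>)" "\<forall>\<sigma>\<in>S2. A S2 \<sigma> = g (B S2 \<sigma>)"
    using assms(1) unfolding DET_def by blast
  obtain g' where g': "\<forall>\<sigma>\<in>S1. B S1 \<sigma> = g' (C S1 \<sigma>)" "\<forall>\<sigma>\<in>S2. B S2 \<sigma> = g' (C S2 \<sigma>)"
    using assms(2) unfolding DET_def by blast
  show ?thesis unfolding DET_def
    by (rule exI[of _ "g \<circ> g'"]) (use g g' in simp)
qed

lemma image_mset_mset_set_cong: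
  assumes "\<forall>x\<in>S. a x = g (b x)"
  shows "image_mset a (mset_set S) = image_mset g (image_mset b (mset_set S))"
proof (cases "finite S")
  case True
  then show ?thesis unfolding image_mset.compositionality
    using assms by (intro image_mset_cong) auto
next
  case False then show ?thesis by simp
qed

lemma DET_hist:
  assumes "DET A B S1 S2"
    and "image_mset (B S1) (mset_set S1) = image_mset (B S2) (mset_set S2)"
  shows "image_mset (A S1) (mset_set S1) = image_mset (A S2) (mset_set S2)"
proof -
  obtain g where g: "\<forall>\<sigma>\<in>S1. A S1 \<sigma> = g (B S1 \<sigma>)" "\<forall>\<sigma>\<in>S2. A S2 \<sigma> = g (B S2 \<sigma>)"
    using assms(1) unfolding DET_def by blast
  show ?thesis using image_mset_mset_set_cong[where a="A S1" and b="B S1", OF g(1)] image_mset_mset_set_cong[where a="A S2" and b="B S2", OF g(2)] assms(2)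
    by simp
qed

lemma DET_jcol:
  assumes "DET (\<lambda>S. F S t) (\<lambda>S. F S s) S1 S2"
  shows "\<exists>g. \<forall>x\<in>jdom S1 S2. jcol F S1 S2 t x = g (jcol F S1 S2 s x)"
proof -
  obtain g where g: "\<forall>\<sigma>\<in>S1. F S1 t \<sigma> = g (F S1 s \<sigma>)" "\<forall>\<sigma>\<in>S2. F S2 t \<sigma> = g (F S2 s \<sigma>)"
    using assms unfolding DET_def by blast
  show ?thesis
    by (rule exI[of _ g]) (use g in \<open>auto simp: jdom_def jcol_def\<close>)
qed

lemma jcol_DET:
  assumes "\<forall>x\<in>jdom S1 S2. \<forall>y\<in>jdom S1 S2. jcol F S1 S2 s x = jcol F S1 S2 s y \<longrightarrow>
              jcol F S1 S2 t x = jcol F S1 S2 t y"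
  shows "DET (\<lambda>S. F S t) (\<lambda>S. F S s) S1 S2"
proof -
  define g where "g c = jcol F S1 S2 t (SOME z. z \<in> jdom S1 S2 \<and> jcol F S1 S2 s z = c)" for c
  have key: "jcol F S1 S2 t x = g (jcol F S1 S2 s x)" if x: "x \<in> jdom S1 S2" for x
  proof -
    have "\<exists>z. z \<in> jdom S1 S2 \<and> jcol F S1 S2 s z = jcol F S1 S2 s x" using x by blast
    then have "(SOME z. z \<in> jdom S1 S2 \<and> jcol F S1 S2 s z = jcol F S1 S2 s x) \<in> jdom S1 S2 \<and>
       jcol F S1 S2 s (SOME z. z \<in> jdom S1 S2 \<and> jcol F S1 S2 s z = jcol F S1 S2 s x) = jcol F S1 S2 s x"
      by (rule someI_ex)
    then show ?thesis unfolding g_def using assms x by metis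
  qed
  show ?thesis unfolding DET_def
  proof (intro exI[of _ g] conjI ballI)
    fix \<sigma> assume "\<sigma> \<in> S1"
    then show "F S1 t \<sigma> = g (F S1 s \<sigma>)" using key[of "Inl \<sigma>"] by (simp add: jdom_def jcol_def)
  next
    fix \<sigma> assume "\<sigma> \<in> S2"
    then show "F S2 t \<sigma> = g (F S2 s \<sigma>)" using key[of "Inr \<sigma>"] by (simp add: jdom_def jcol_def)
  qed
qed

lemma dist_iff:
  fixes F :: "'v list set \<Rightarrow> nat \<Rightarrow> 'v list \<Rightarrow> colour"
  assumes fin: "finite S1" "finite S2"
    and ref: "\<And>t. DET (\<lambda>S. F S t) (\<lambda>S. F S (Suc t)) S1 S2"
    and prp: "\<And>s. DET (\<lambda>S. F S (Suc s)) (\<lambda>S. F S s) S1 S2 \<Longrightarrow>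
                    DET (\<lambda>S. F S (Suc (Suc s))) (\<lambda>S. F S (Suc s)) S1 S2"
  shows "distinguishes F S1 S2 \<longleftrightarrow> (\<exists>t. histogram F S1 t \<noteq> histogram F S2 t)"
proof -
  let ?J = "jdom S1 S2"
  let ?c = "jcol F S1 S2"
  define K where "K t = {(x, y). x \<in> ?J \<and> y \<in> ?J \<and> ?c t x = ?c t y}" for t
  have finJ: "finite ?J" using fin unfolding jdom_def by simp
  have finK: "finite (K t)" for t
    by (rule finite_subset[of _ "?J \<times> ?J"]) (use finJ in \<open>auto simp: K_def\<close>)
  have Ksub: "K (Suc t) \<subseteq> K t" for t
  proof -
    obtain g where "\<forall>x\<in>?J. ?c t x = g (?c (Suc t) x)" using DET_jcol[OF ref[of t]] by blast
    then show ?thesis unfolding K_def by auto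
  qed
  have "\<exists>T. K (Suc T) = K T"
  proof (rule ccontr)
    assume "\<not> ?thesis"
    then have ps: "K (Suc t) \<subset> K t" for t using Ksub by blast
    have "card (K t) + t \<le> card (K 0)" for t
    proof (induction t)
      case 0 then show ?case by simp
    next
      case (Suc t)
      have "card (K (Suc t)) < card (K t)" using psubset_card_mono[OF finK ps] .
      then show ?case using Suc by simp
    qed
    from this[of "Suc (card (K 0))"] show False by simp
  qed
  then obtain T where T: "K (Suc T) = K T" by blast
  have PT: "\<forall>x\<in>?J. \<forall>y\<in>?J. (?c T x = ?c T y) \<longleftrightarrow> (?c (Suc T) x = ?c (Suc T) y)"
  proof (intro ballI)
    fix x y assume "x \<in> ?J" "y \<in> ?J"
    then show "(?c T x = ?c T y) \<longleftrightarrow> (?c (Suc T) x = ?c (Suc T) y)"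
      using T unfolding K_def by (metis (mono_tags, lifting) case_prod_conv mem_Collect_eq)
  qed
  define T0 where "T0 = stab_time F S1 S2"
  have PT0: "\<forall>x\<in>?J. \<forall>y\<in>?J. (?c T0 x = ?c T0 y) \<longleftrightarrow> (?c (Suc T0) x = ?c (Suc T0) y)"
    unfolding T0_def stab_time_def by (rule LeastI_ex) (use PT in blast)
  have st: "DET (\<lambda>S. F S (Suc T0)) (\<lambda>S. F S T0) S1 S2"
    by (rule jcol_DET) (use PT0 in blast)
  have stepd: "DET (\<lambda>S. F S (Suc (T0 + d))) (\<lambda>S. F S (T0 + d)) S1 S2" for d
  proof (induction d)
    case 0 then show ?case using st by simp
  next
    case (Suc d) then show ?case using prp by simp
  qed
  have up: "DET (\<lambda>S. F S (T0 + d)) (\<lambda>S. F S T0) S1 S2" for d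
  proof (induction d)
    case 0 then show ?case by (simp add: DET_refl)
  next
    case (Suc d) then show ?case using DET_trans[OF stepd[of d]] by simp
  qed
  have down: "DET (\<lambda>S. F S t) (\<lambda>S. F S (t + d)) S1 S2" for t d
  proof (induction d)
    case 0 then show ?case by (simp add: DET_refl)
  next
    case (Suc d) then show ?case using DET_trans[OF Suc ref[of "t + d"]] by simp
  qed
  have all: "DET (\<lambda>S. F S t) (\<lambda>S. F S T0) S1 S2" for t
  proof (cases "t \<le> T0")
    case True then show ?thesis using down[of t "T0 - t"] by simp
  next
    case False then show ?thesis using up[of "t - T0"] by simp
  qed
  show ?thesis
  proof
    assume "distinguishes F S1 S2"
    then show "\<exists>t. histogram F S1 t \<noteq> histogram F S2 t"
      unfolding distinguishes_def by blast
  next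
    assume "\<exists>t. histogram F S1 t \<noteq> histogram F S2 t"
    then obtain t where "histogram F S1 t \<noteq> histogram F S2 t" by blast
    then show "distinguishes F S1 S2"
      unfolding distinguishes_def T0_def[symmetric] histogram_def
      using DET_hist[OF all[of t]] by blast
  qed
qed

theorem lemma1:
  fixes V1 V2 :: "'v set" and S1 S2 :: "'v list set"
  assumes "dsc V1 S1" and "dsc V2 S2"
  shows "distinguishes colR S1 S2 \<longleftrightarrow> distinguishes colG S1 S2"
proof -
  have fin: "finite S1" "finite S2" using assms by (auto intro: dsc_finite)
  have dR: "distinguishes colR S1 S2 \<longleftrightarrow> (\<exists>t. histogram colR S1 t \<noteq> histogram colR S2 t)"
  proof (rule dist_iff[OF fin])
    fix t show "DET (\<lambda>S. colR S t) (\<lambda>S. colR S (Suc t)) S1 S2"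
      unfolding DET_def by (rule exI[of _ r1]) simp
  next
    fix s assume "DET (\<lambda>S. colR S (Suc s)) (\<lambda>S. colR S s) S1 S2"
    then obtain h where h: "\<forall>x\<in>S1. colR S1 (Suc s) x = h (colR S1 s x)"
      "\<forall>x\<in>S2. colR S2 (Suc s) x = h (colR S2 s x)" unfolding DET_def by blast
    show "DET (\<lambda>S. colR S (Suc (Suc s))) (\<lambda>S. colR S (Suc s)) S1 S2"
      unfolding DET_def
      by (rule exI[of _ "stepR h"]) (use step_R[OF assms(1) h(1)] step_R[OF assms(2) h(2)] in blast)
  qed
  have dG: "distinguishes colG S1 S2 \<longleftrightarrow> (\<exists>t. histogram colG S1 t \<noteq> histogram colG S2 t)"
  proof (rule dist_iff[OF fin])
    fix t show "DET (\<lambda>S. colG S t) (\<lambda>S. colG S (Suc t)) S1 S2"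
      unfolding DET_def by (rule exI[of _ q1]) simp
  next
    fix s assume "DET (\<lambda>S. colG S (Suc s)) (\<lambda>S. colG S s) S1 S2"
    then obtain h where h: "\<forall>x\<in>S1. colG S1 (Suc s) x = h (colG S1 s x)"
      "\<forall>x\<in>S2. colG S2 (Suc s) x = h (colG S2 s x)" unfolding DET_def by blast
    show "DET (\<lambda>S. colG S (Suc (Suc s))) (\<lambda>S. colG S (Suc s)) S1 S2"
      unfolding DET_def
      by (rule exI[of _ "stepG h"]) (use step_G[OF assms(1) h(1)] step_G[OF assms(2) h(2)] in blast)
  qed
  have RG: "DET (\<lambda>S. colR S t) (\<lambda>S. colG S t) S1 S2" for t
  proof (induction t)
    case 0 show ?case unfolding DET_def by (rule exI[of _ "\<lambda>_. Init"]) simp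
  next
    case (Suc t)
    then obtain g where g: "\<forall>x\<in>S1. colR S1 t x = g (colG S1 t x)"
      "\<forall>x\<in>S2. colR S2 t x = g (colG S2 t x)" unfolding DET_def by blast
    show ?case unfolding DET_def
      by (rule exI[of _ "RG g"]) (use R_by_G[OF assms(1) g(1)] R_by_G[OF assms(2) g(2)] in blast)
  qed
  have GR: "DET (\<lambda>S. colG S t) (\<lambda>S. colR S (2 * t)) S1 S2" for t
  proof (induction t)
    case 0 show ?case unfolding DET_def by (rule exI[of _ "\<lambda>_. Init"]) simp
  next
    case (Suc t)
    then obtain g where g: "\<forall>x\<in>S1. colG S1 t x = g (colR S1 (2 * t) x)"
      "\<forall>x\<in>S2. colG S2 t x = g (colR S2 (2 * t) x)" unfolding DET_def by blast
    show ?case unfolding DET_def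
      by (rule exI[of _ "GR g"]) (use G_by_R[OF assms(1) g(1)] G_by_R[OF assms(2) g(2)] in blast)
  qed
  have "(\<exists>t. histogram colR S1 t \<noteq> histogram colR S2 t) \<longleftrightarrow>
        (\<exists>t. histogram colG S1 t \<noteq> histogram colG S2 t)"
  proof
    assume "\<exists>t. histogram colR S1 t \<noteq> histogram colR S2 t"
    then obtain t where "histogram colR S1 t \<noteq> histogram colR S2 t" by blast
    then have "histogram colG S1 t \<noteq> histogram colG S2 t"
      unfolding histogram_def using DET_hist[OF RG[of t]] by blast
    then show "\<exists>t. histogram colG S1 t \<noteq> histogram colG S2 t" by blast
  next
    assume "\<exists>t. histogram colG S1 t \<noteq> histogram colG S2 t"
    then obtain t where "histogram colG S1 t \<noteq> histogram colG S2 t" by blast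
    then have "histogram colR S1 (2 * t) \<noteq> histogram colR S2 (2 * t)"
      unfolding histogram_def using DET_hist[OF GR[of t]] by blast
    then show "\<exists>t. histogram colR S1 t \<noteq> histogram colR S2 t" by blast
  qed
  then show ?thesis using dR dG by simp
qed

end
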